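(* Let $S_{\rm tr}, S_1,\dots,S_m$ be the output of Algorithm 1 (defined in the context) and set $\beta := \sum_{i=1}^m f_i(S_{\rm tr})$. If every $f_i$ is monotone and submodular, then $$\sum_{i=1}^m f_i(S_{\rm tr}\cup S_i)\;\ge\;\max\Bigl\{\beta,\;(1-1/e)(\mathrm{OPT}-2\beta)+\beta\Bigr\}.$$ Consequently $\sum_{i=1}^m f_i(S_{\rm tr}\cup S_i)\ge \tfrac12\,\mathrm{OPT}$ for every value of $\beta$.
   Context: $V$ is a finite ground set with $|V|=n$; $k,l$ are integers with $1\le l<k\le n$. For $i=1,\dots,m$, $f_i:2^V\to\mathbb{R}_{\ge 0}$ is a set function; $f_i$ is monotone if $A\subseteq B\Rightarrow f_i(A)\le f_i(B)$ and submodular if $f_i(A)+f_i(B)\ge f_i(A\cup B)+f_i(A\cap B)$ for all $A,B\subseteq V$. Write $\Delta_i(e\mid S)=f_i(S\cup\{e\})-f_i(S)$. Define $$\mathrm{OPT}=\max_{S_{\rm tr}\subseteq V,\,|S_{\rm tr}|\le l}\;\sum_{i=1}^m\;\max_{S_i\subseteq V,\,|S_i|\le k-l} f_i(S_{\rm tr}\cup S_i).$$ Algorithm 1: start with $S_{\rm tr}=S_1=\dots=S_m=\emptyset$. Phase 1: for $t=1,\dots,l$, choose $e^*\in\arg\max_{e\in V\setminus S_{\rm tr}}\sum_{i=1}^m\Delta_i(e\mid S_{\rm tr})$ and set $S_{\rm tr}\leftarrow S_{\rm tr}\cup\{e^*\}$. Phase 2: for $t=1,\dots,k-l$ and for each $i=1,\dots,m$,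 choose $e_i^*\in\arg\max_{e\in V\setminus(S_{\rm tr}\cup S_i)}\Delta_i(e\mid S_{\rm tr}\cup S_i)$ and set $S_i\leftarrow S_i\cup\{e_i^*\}$. Output $S_{\rm tr},S_1,\dots,S_m$. Ties in all argmax's are broken arbitrarily. *)

theory Defs
  imports Complex_Main
begin

definition monotone_on_subsets :: "'a set \<Rightarrow> ('a set \<Rightarrow> real) \<Rightarrow> bool" where
  "monotone_on_subsets V g \<longleftrightarrow> (\<forall>A B. A \<subseteq> B \<and> B \<subseteq> V \<longrightarrow> g A \<le> g B)"

definition submodular_on_subsets :: "'a set \<Rightarrow> ('a set \<Rightarrow> real) \<Rightarrow> bool" where
  "submodular_on_subsets V g \<longleftrightarrow>
     (\<forall>A B. A \<subseteq> V \<and> B \<subseteq> V \<longrightarrow> g A + g B \<ge> g (A \<union> B) + g (A \<inter> B))"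

text \<open>Ties are broken arbitrarily.\<close>
definition greedy_run :: "'a set \<Rightarrow> 'a set \<Rightarrow> ('a set \<Rightarrow> 'a \<Rightarrow> real) \<Rightarrow> 'a list \<Rightarrow> bool" where
  "greedy_run V B score xs \<longleftrightarrow>
     (\<forall>t < length xs.
        xs ! t \<in> V - (B \<union> set (take t xs)) \<and>
        (\<forall>e \<in> V - (B \<union> set (take t xs)).
            score (set (take t xs)) e \<le> score (set (take t xs)) (xs ! t)))"

definition OPT :: "'a set \<Rightarrow> nat \<Rightarrow> nat \<Rightarrow> nat \<Rightarrow> (nat \<Rightarrow> 'a set \<Rightarrow> real) \<Rightarrow> real" where
  "OPT V k l m f =
     Max ((\<lambda>T. \<Sum>i=1..m. Max ((\<lambda>S. f i (T \<union> S)) ` {S. S \<subseteq> V \<and> card S \<le> k - l}))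
          ` {T. T \<subseteq> V \<and> card T \<le> l})"

end

theory Submission
  imports Defs
begin

lemma dim_ret:
  assumes mo: "monotone_on_subsets V g" and sm: "submodular_on_subsets V g"
    and AB: "A \<subseteq> B" "B \<subseteq> V" and e: "e \<in> V"
  shows "g (B \<union> {e}) - g B \<le> g (A \<union> {e}) - g A"
proof (cases "e \<in> B")
  case True
  then have "B \<union> {e} = B" by auto
  moreover have "g A \<le> g (A \<union> {e})" using mo AB e unfolding monotone_on_subsets_def
    by (metis Un_upper1 insert_subset order_trans sup.orderE sup_commute insert_is_Un)
  ultimately show ?thesis by simp
next
  case False
  have "g (A \<union> {e}) + g B \<ge> g ((A \<union> {e}) \<union> B) + g ((A \<union> {e}) \<inter> B)"
    using sm[unfolded submodular_on_subsets_def, rule_format, of "A \<union> {e}" B] AB e by auto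
  moreover have "(A \<union> {e}) \<inter> B = A" using False AB by auto
  moreover have "(A \<union> {e}) \<union> B = B \<union> {e}" using AB by auto
  ultimately show ?thesis by simp
qed

lemma sum_bound:
  assumes mo: "monotone_on_subsets V g" and sm: "submodular_on_subsets V g"
    and fin: "finite X"
  shows "A \<union> X \<subseteq> V \<Longrightarrow> g (A \<union> X) \<le> g A + (\<Sum>e\<in>X. g (A \<union> {e}) - g A)"
  using fin
proof (induction X rule: finite_induct)
  case empty
  then show ?case by simp
next
  case (insert x F)
  have "g ((A \<union> F) \<union> {x}) - g (A \<union> F) \<le> g (A \<union> {x}) - g A"
    by (rule dim_ret[OF mo sm]) (use insert.prems in auto)
  moreover have "A \<union> insert x F = (A \<union> F) \<union> {x}" by auto
  moreover have "g (A \<union> F) \<le> g A + (\<Sum>e\<in>F. g (A \<union> {e}) - g A)"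
    using insert by auto
  ultimately show ?case using insert.hyps by simp
qed

lemma greedy_step:
  assumes mo: "monotone_on_subsets V g" and sm: "submodular_on_subsets V g"
    and finV: "finite V" and BV: "B \<subseteq> V"
    and gr: "greedy_run V B (\<lambda>S e. g (B \<union> S \<union> {e}) - g (B \<union> S)) xs"
    and t: "t < length xs" and SV: "S \<subseteq> V" and cS: "card S \<le> r"
  shows "g (B \<union> S) - g (B \<union> set (take t xs))
     \<le> real r * (g (B \<union> set (take (Suc t) xs)) - g (B \<union> set (take t xs)))"
proof -
  define P where "P = set (take t xs)"
  have xt: "xs ! t \<in> V - (B \<union> P)" and best:
    "\<And>e. e \<in> V - (B \<union> P) \<Longrightarrow> g (B \<union> P \<union> {e}) - g (B \<union> P) \<le> g (B \<union> P \<union> {xs!t}) - g (B \<union> P)"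
    using gr t unfolding greedy_run_def P_def by auto
  have PV: "P \<subseteq> V"
  proof
    fix x assume "x \<in> P"
    then obtain j where "j < t" "x = xs ! j" unfolding P_def
      by (auto simp: in_set_conv_nth)
    then show "x \<in> V" using gr t unfolding greedy_run_def by auto
  qed
  have tk: "set (take (Suc t) xs) = P \<union> {xs ! t}"
    using t by (simp add: take_Suc_conv_app_nth P_def)
  define D where "D = g (B \<union> P \<union> {xs!t}) - g (B \<union> P)"
  have D0: "D \<ge> 0" using mo xt BV PV unfolding D_def monotone_on_subsets_def
    by (metis Diff_iff Un_subset_iff Un_upper1 empty_subsetI insert_subset diff_ge_0_iff_ge)
  define X where "X = S - (B \<union> P)"
  have finX: "finite X" using SV finV X_def finite_subset by blast
  have "g (B \<union> S) \<le> g ((B \<union> P) \<union> X)"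
    using mo[unfolded monotone_on_subsets_def, rule_format, of "B \<union> S" "(B \<union> P) \<union> X"]
      SV BV PV unfolding X_def by auto
  also have "\<dots> \<le> g (B \<union> P) + (\<Sum>e\<in>X. g (B \<union> P \<union> {e}) - g (B \<union> P))"
    by (rule sum_bound[OF mo sm finX]) (use SV BV PV X_def in auto)
  also have "(\<Sum>e\<in>X. g (B \<union> P \<union> {e}) - g (B \<union> P)) \<le> (\<Sum>e\<in>X. D)"
    by (rule sum_mono) (use best SV X_def D_def in auto)
  also have "(\<Sum>e\<in>X. D) = real (card X) * D" by simp
  also have "\<dots> \<le> real r * D"
  proof -
    have "card X \<le> card S" unfolding X_def using SV finV by (intro card_mono) (auto intro: finite_subset)
    then show ?thesis using cS D0 by (intro mult_right_mono) auto
  qed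
  finally show ?thesis unfolding D_def tk P_def by (simp add: sup_assoc)
qed

lemma greedy_bound:
  assumes mo: "monotone_on_subsets V g" and sm: "submodular_on_subsets V g"
    and finV: "finite V" and BV: "B \<subseteq> V"
    and gr: "greedy_run V B (\<lambda>S e. g (B \<union> S \<union> {e}) - g (B \<union> S)) xs"
    and len: "length xs = r" and r: "r \<ge> 1" and SV: "S \<subseteq> V" and cS: "card S \<le> r"
  shows "g (B \<union> set xs) \<ge> g B + (1 - 1 / exp 1) * (g (B \<union> S) - g B)"
proof -
  define Ov where "Ov = g (B \<union> S)"
  define a where "a t = g (B \<union> set (take t xs))" for t
  define q where "q = 1 - 1 / real r"
  have q0: "q \<ge> 0" "q \<le> 1" using r unfolding q_def by (auto simp: field_simps)
  have rec: "Ov - a (Suc t) \<le> q * (Ov - a t)" if "t < r" for t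
  proof -
    have "Ov - a t \<le> real r * (a (Suc t) - a t)"
      using greedy_step[OF mo sm finV BV gr _ SV cS, of t] that len unfolding Ov_def a_def by simp
    then have "(Ov - a t) / real r \<le> a (Suc t) - a t" using r by (simp add: field_simps)
    then show ?thesis unfolding q_def by (simp add: algebra_simps)
  qed
  have ind: "Ov - a t \<le> q ^ t * (Ov - a 0)" if "t \<le> r" for t
    using that
  proof (induction t)
    case 0 then show ?case by simp
  next
    case (Suc t)
    have "Ov - a (Suc t) \<le> q * (Ov - a t)" using rec Suc by simp
    also have "\<dots> \<le> q * (q ^ t * (Ov - a 0))" using Suc q0 by (intro mult_left_mono) auto
    finally show ?case by simp
  qed
  have D0: "Ov - a 0 \<ge> 0" using mo SV BV unfolding Ov_def a_def monotone_on_subsets_def by auto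
  have "q ^ r \<le> exp (-1)"
  proof -
    have "q \<le> exp (- (1 / real r))" unfolding q_def using exp_ge_add_one_self[of "- (1 / real r)"] by simp
    then have "q ^ r \<le> exp (- (1 / real r)) ^ r" using q0 by (intro power_mono) auto
    also have "\<dots> = exp (- (1 / real r) * real r)" by (simp add: exp_of_nat_mult[symmetric] mult.commute)
    also have "\<dots> = exp (-1)" using r by simp
    finally show ?thesis .
  qed
  then have "q ^ r * (Ov - a 0) \<le> exp (-1) * (Ov - a 0)" using D0 by (intro mult_right_mono) auto
  with ind[of r] have "Ov - a r \<le> exp (-1) * (Ov - a 0)" by simp
  moreover have "a r = g (B \<union> set xs)" "a 0 = g B" unfolding a_def using len by auto
  moreover have "exp (-1::real) = 1 / exp 1" by (simp add: exp_minus field_simps)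
  ultimately show ?thesis unfolding Ov_def by (simp add: algebra_simps)
qed

lemma phase1_bound:
  fixes f :: "nat \<Rightarrow> 'a set \<Rightarrow> real"
  assumes finV: "finite V"
    and nonneg: "\<And>i S. i \<in> {1..m} \<Longrightarrow> S \<subseteq> V \<Longrightarrow> f i S \<ge> 0"
    and mono: "\<And>i. i \<in> {1..m} \<Longrightarrow> monotone_on_subsets V (f i)"
    and submod: "\<And>i. i \<in> {1..m} \<Longrightarrow> submodular_on_subsets V (f i)"
    and len: "length tr = l"
    and gr: "greedy_run V {} (\<lambda>S e. \<Sum>i=1..m. f i (S \<union> {e}) - f i S) tr"
    and TV: "T \<subseteq> V" and cT: "card T \<le> l"
    and SxV: "\<And>i. i \<in> {1..m} \<Longrightarrow> Sx i \<subseteq> V"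
  shows "(\<Sum>i=1..m. f i (T \<union> Sx i)) \<le> (\<Sum>i=1..m. f i (set tr \<union> Sx i)) + (\<Sum>i=1..m. f i (set tr))"
proof -
  define R where "R = set tr"
  have RV: "R \<subseteq> V"
  proof
    fix x assume "x \<in> R"
    then obtain j where "j < length tr" "x = tr ! j" unfolding R_def by (auto simp: in_set_conv_nth)
    then show "x \<in> V" using gr unfolding greedy_run_def by auto
  qed
  define X where "X = T - R"
  have finX: "finite X" using TV finV X_def finite_subset by blast
  define G where "G e = (\<Sum>i=1..m. f i (R \<union> {e}) - f i R)" for e
  define P where "P j = set (take j tr)" for j
  define gain where "gain j = (\<Sum>i=1..m. f i (P (Suc j)) - f i (P j))" for j
  have PR: "P j \<subseteq> R" for j unfolding P_def R_def by (rule set_take_subset)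
  have step1: "f i (T \<union> Sx i) \<le> f i (R \<union> Sx i) + (\<Sum>e\<in>X. f i (R \<union> {e}) - f i R)"
    if i: "i \<in> {1..m}" for i
  proof -
    have "f i (T \<union> Sx i) \<le> f i ((R \<union> Sx i) \<union> X)"
      using mono[OF i, unfolded monotone_on_subsets_def, rule_format, of "T \<union> Sx i" "(R \<union> Sx i) \<union> X"]
        TV RV SxV[OF i] unfolding X_def by auto
    also have "\<dots> \<le> f i (R \<union> Sx i) + (\<Sum>e\<in>X. f i (R \<union> Sx i \<union> {e}) - f i (R \<union> Sx i))"
      by (rule sum_bound[OF mono[OF i] submod[OF i] finX]) (use TV RV SxV[OF i] X_def in auto)
    also have "(\<Sum>e\<in>X. f i (R \<union> Sx i \<union> {e}) - f i (R \<union> Sx i)) \<le> (\<Sum>e\<in>X. f i (R \<union> {e}) - f i R)"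
      by (rule sum_mono, rule dim_ret[OF mono[OF i] submod[OF i]]) (use TV RV SxV[OF i] X_def in auto)
    finally show ?thesis by simp
  qed
  have "(\<Sum>i=1..m. f i (T \<union> Sx i)) \<le> (\<Sum>i=1..m. f i (R \<union> Sx i) + (\<Sum>e\<in>X. f i (R \<union> {e}) - f i R))"
    by (rule sum_mono) (use step1 in auto)
  also have "\<dots> = (\<Sum>i=1..m. f i (R \<union> Sx i)) + (\<Sum>e\<in>X. G e)"
    unfolding G_def sum.distrib by (simp add: sum.swap[of _ X])
  finally have A: "(\<Sum>i=1..m. f i (T \<union> Sx i)) \<le> (\<Sum>i=1..m. f i (R \<union> Sx i)) + (\<Sum>e\<in>X. G e)" .
  have PV: "P j \<subseteq> V" for j using PR RV by blast
  have Gle: "G e \<le> gain j" if e: "e \<in> X" and j: "j < l" for e j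
  proof -
    have eV: "e \<in> V" "e \<notin> R" using e TV unfolding X_def by auto
    have "G e \<le> (\<Sum>i=1..m. f i (P j \<union> {e}) - f i (P j))"
      unfolding G_def by (rule sum_mono, rule dim_ret) (use mono submod PR RV eV in auto)
    also have "\<dots> \<le> gain j"
    proof -
      have tk: "P (Suc j) = P j \<union> {tr ! j}" using j len by (simp add: P_def take_Suc_conv_app_nth)
      have "e \<in> V - ({} \<union> set (take j tr))" using eV PR unfolding P_def by auto
      moreover have "gain j = (\<Sum>i=1..m. f i (set (take j tr) \<union> {tr ! j}) - f i (set (take j tr)))"
        unfolding gain_def tk by (simp add: P_def)
      ultimately show ?thesis using gr j len unfolding greedy_run_def by (simp add: P_def)
    qed
    finally show ?thesis .
  qed
  have gain0: "gain j \<ge> 0" if j: "j < l" for j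
  proof -
    have tk: "P (Suc j) = P j \<union> {tr ! j}" using j len by (simp add: P_def take_Suc_conv_app_nth)
    have "tr ! j \<in> V" using gr j len unfolding greedy_run_def by auto
    then show ?thesis unfolding gain_def tk
    proof (intro sum_nonneg)
      fix i assume i: "i \<in> {1..m}"
      show "0 \<le> f i (P j \<union> {tr ! j}) - f i (P j)"
        using mono[OF i, unfolded monotone_on_subsets_def, rule_format, of "P j" "P j \<union> {tr ! j}"]
          PV[of j] \<open>tr ! j \<in> V\<close> by auto
    qed
  qed
  have telesc: "(\<Sum>j<l. gain j) = (\<Sum>i=1..m. f i R - f i {})"
  proof -
    have "(\<Sum>j<l. gain j) = (\<Sum>i=1..m. \<Sum>j<l. f i (P (Suc j)) - f i (P j))"
      unfolding gain_def by (rule sum.swap)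
    also have "\<dots> = (\<Sum>i=1..m. f i (P l) - f i (P 0))" by (rule sum.cong[OF refl], rule sum_lessThan_telescope[where f="\<lambda>j. f _ (P j)"])
    also have "\<dots> = (\<Sum>i=1..m. f i R - f i {})" unfolding P_def R_def using len by simp
    finally show ?thesis .
  qed
  have B: "(\<Sum>e\<in>X. G e) \<le> (\<Sum>i=1..m. f i R)"
  proof (cases "X = {}")
    case True
    have "0 \<le> (\<Sum>i=1..m. f i R)" by (rule sum_nonneg) (use nonneg RV in auto)
    then show ?thesis using True by simp
  next
    case False
    have cX: "card X \<le> l" using cT finV TV unfolding X_def
      by (meson Diff_subset card_mono finite_subset le_trans)
    have "card X > 0" using False finX by (simp add: card_gt_0_iff)
    with cX have l0: "l > 0" by simp
    define M where "M = Min (gain ` {..<l})"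
    have Min_in': "M \<in> gain ` {..<l}" unfolding M_def using l0 by (intro Min_in) auto
    then obtain j0 where j0: "j0 < l" "M = gain j0" by auto
    have M0: "M \<ge> 0" using gain0 j0 by simp
    have "(\<Sum>e\<in>X. G e) \<le> (\<Sum>e\<in>X. M)" by (rule sum_mono) (use Gle j0 in auto)
    also have "\<dots> = real (card X) * M" by simp
    also have "\<dots> \<le> real l * M" using cX M0 by (intro mult_right_mono) auto
    also have "\<dots> = (\<Sum>j<l. M)" by simp
    also have "\<dots> \<le> (\<Sum>j<l. gain j)" by (rule sum_mono) (auto simp: M_def)
    also have "\<dots> = (\<Sum>i=1..m. f i R - f i {})" by (rule telesc)
    also have "\<dots> \<le> (\<Sum>i=1..m. f i R)" by (rule sum_mono) (use nonneg in auto)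
    finally show ?thesis .
  qed
  show ?thesis using A B unfolding R_def by simp
qed

lemma arith_final:
  fixes c W b r :: real
  assumes "0 \<le> (2 * c - 1) * (W / 2 - b)" "r \<ge> c * (W - 2 * b) + b"
  shows "r \<ge> W / 2"
proof -
  have "(2 * c - 1) * (W / 2 - b) = c * (W - 2 * b) + b - W / 2" by (simp add: algebra_simps)
  then show ?thesis using assms by linarith
qed

theorem proposition1:
  fixes V :: "'a set" and n k l m :: nat and f :: "nat \<Rightarrow> 'a set \<Rightarrow> real"
    and tr :: "'a list" and ps :: "nat \<Rightarrow> 'a list"
  assumes finV: "finite V" and cardV: "card V = n"
    and kl: "1 \<le> l" "l < k" "k \<le> n"
    and nonneg: "\<And>i S. i \<in> {1..m} \<Longrightarrow> S \<subseteq> V \<Longrightarrow> f i S \<ge> 0"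
    and mono: "\<And>i. i \<in> {1..m} \<Longrightarrow> monotone_on_subsets V (f i)"
    and submod: "\<And>i. i \<in> {1..m} \<Longrightarrow> submodular_on_subsets V (f i)"
    and phase1: "length tr = l"
      "greedy_run V {} (\<lambda>S e. \<Sum>i=1..m. f i (S \<union> {e}) - f i S) tr"
    and phase2: "\<And>i. i \<in> {1..m} \<Longrightarrow> length (ps i) = k - l"
      "\<And>i. i \<in> {1..m} \<Longrightarrow>
         greedy_run V (set tr) (\<lambda>S e. f i (set tr \<union> S \<union> {e}) - f i (set tr \<union> S)) (ps i)"
  defines "\<beta> \<equiv> \<Sum>i=1..m. f i (set tr)"
  shows "(\<Sum>i=1..m. f i (set tr \<union> set (ps i)))
           \<ge> max \<beta> ((1 - 1 / exp 1) * (OPT V k l m f - 2 * \<beta>) + \<beta>)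
       \<and> (\<Sum>i=1..m. f i (set tr \<union> set (ps i))) \<ge> OPT V k l m f / 2"
proof -
  define c :: real where "c = 1 - 1 / exp 1"
  define res where "res = (\<Sum>i=1..m. f i (set tr \<union> set (ps i)))"
  define TT where "TT = {T. T \<subseteq> V \<and> card T \<le> l}"
  define SS where "SS = {S. S \<subseteq> V \<and> card S \<le> k - l}"
  define h where "h T = (\<Sum>i=1..m. Max ((\<lambda>S. f i (T \<union> S)) ` SS))" for T
  have trV: "set tr \<subseteq> V"
  proof
    fix x assume "x \<in> set tr"
    then obtain j where "j < length tr" "x = tr ! j" by (auto simp: in_set_conv_nth)
    then show "x \<in> V" using phase1(2) unfolding greedy_run_def by auto
  qed
  have finTT: "finite TT" unfolding TT_def using finV by (rule rev_finite_subset[OF finite_Pow_iff[THEN iffD2]]) auto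
  have finSS: "finite SS" unfolding SS_def using finV by (rule rev_finite_subset[OF finite_Pow_iff[THEN iffD2]]) auto
  have "{} \<in> TT" unfolding TT_def by auto
  have "{} \<in> SS" unfolding SS_def by auto
  have OPTeq: "OPT V k l m f = Max (h ` TT)" unfolding OPT_def h_def TT_def SS_def by simp
  have "Max (h ` TT) \<in> h ` TT" using finTT \<open>{} \<in> TT\<close> by (intro Max_in) auto
  then obtain Ts where Ts: "Ts \<in> TT" "OPT V k l m f = h Ts" using OPTeq by auto
  define Sx where "Sx i = (SOME S. S \<in> SS \<and> f i (Ts \<union> S) = Max ((\<lambda>S. f i (Ts \<union> S)) ` SS))" for i
  have Sx: "Sx i \<in> SS \<and> f i (Ts \<union> Sx i) = Max ((\<lambda>S. f i (Ts \<union> S)) ` SS)" for i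
  proof -
    have "Max ((\<lambda>S. f i (Ts \<union> S)) ` SS) \<in> (\<lambda>S. f i (Ts \<union> S)) ` SS"
      using finSS \<open>{} \<in> SS\<close> by (intro Max_in) auto
    then have "\<exists>S. S \<in> SS \<and> f i (Ts \<union> S) = Max ((\<lambda>S. f i (Ts \<union> S)) ` SS)" by auto
    then show ?thesis unfolding Sx_def by (rule someI_ex)
  qed
  have OPTx: "OPT V k l m f = (\<Sum>i=1..m. f i (Ts \<union> Sx i))" using Ts(2) Sx unfolding h_def by simp
  have SxV: "Sx i \<subseteq> V" "card (Sx i) \<le> k - l" for i using Sx[of i] unfolding SS_def by auto
  have P1: "OPT V k l m f \<le> (\<Sum>i=1..m. f i (set tr \<union> Sx i)) + \<beta>"
    unfolding OPTx \<beta>_def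
    by (rule phase1_bound[OF finV nonneg mono submod phase1]) (use Ts(1) SxV in \<open>auto simp: TT_def\<close>)
  have P2: "f i (set tr \<union> set (ps i)) \<ge> f i (set tr) + c * (f i (set tr \<union> Sx i) - f i (set tr))"
    if i: "i \<in> {1..m}" for i
    unfolding c_def
    by (rule greedy_bound[OF mono[OF i] submod[OF i] finV trV phase2(2)[OF i] phase2(1)[OF i]])
       (use kl SxV in auto)
  have "res \<ge> (\<Sum>i=1..m. f i (set tr) + c * (f i (set tr \<union> Sx i) - f i (set tr)))"
    unfolding res_def by (rule sum_mono) (use P2 in auto)
  also have "(\<Sum>i=1..m. f i (set tr) + c * (f i (set tr \<union> Sx i) - f i (set tr)))
      = \<beta> + c * ((\<Sum>i=1..m. f i (set tr \<union> Sx i)) - \<beta>)"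
    unfolding \<beta>_def by (simp add: sum.distrib sum_distrib_left sum_subtractf algebra_simps)
  finally have R1: "res \<ge> \<beta> + c * ((\<Sum>i=1..m. f i (set tr \<union> Sx i)) - \<beta>)" .
  have e2: "exp (1::real) \<ge> 2" using exp_ge_add_one_self[of 1] by simp
  have c0: "c \<ge> 1/2" "c \<le> 1" unfolding c_def using e2 by (auto simp: field_simps)
  have R2: "res \<ge> c * (OPT V k l m f - 2 * \<beta>) + \<beta>"
  proof -
    have "c * (OPT V k l m f - 2 * \<beta>) \<le> c * ((\<Sum>i=1..m. f i (set tr \<union> Sx i)) - \<beta>)"
      using P1 c0 by (intro mult_left_mono) auto
    then show ?thesis using R1 by simp
  qed
  have R0: "res \<ge> \<beta>" unfolding res_def \<beta>_def
  proof (rule sum_mono)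
    fix i assume i: "i \<in> {1..m}"
    have "set (ps i) \<subseteq> V"
    proof
      fix x assume "x \<in> set (ps i)"
      then obtain j where "j < length (ps i)" "x = ps i ! j" by (auto simp: in_set_conv_nth)
      then show "x \<in> V" using phase2(2)[OF i] unfolding greedy_run_def by auto
    qed
    then show "f i (set tr) \<le> f i (set tr \<union> set (ps i))"
      using mono[OF i, unfolded monotone_on_subsets_def, rule_format, of "set tr" "set tr \<union> set (ps i)"] trV
      by auto
  qed
  have R3: "res \<ge> OPT V k l m f / 2"
  proof (cases "\<beta> \<ge> OPT V k l m f / 2")
    case True then show ?thesis using R0 by simp
  next
    case False
    have "0 \<le> (2 * c - 1) * (OPT V k l m f / 2 - \<beta>)" using False c0 by (intro mult_nonneg_nonneg) auto
    then show ?thesis using R2 by (rule arith_final)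
  qed
  show ?thesis using R0 R2 R3 unfolding res_def c_def by simp
qed

end
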